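(* Let $X$ be a compactum, let $n\geq2$, and let $f:X\to X$ be a function. Consider the statements: (1) $f$ is Touhey; (2) $F_n(f)$ is Touhey; (3) $SF_n(f)$ is Touhey. Then (2) and (3) are equivalent and (2) implies (1). Moreover, (1) does not imply (2) in general: there exist such $X$, $n$, $f$ with $f$ Touhey but $F_n(f)$ not Touhey.
   Context: A compactum is a nondegenerate compact, perfect, Hausdorff topological space. $F_n(X)$ is the set of nonempty subsets of $X$ with at most $n$ points, with the Vietoris topology; $F_1(X)=\{\{x\}:x\in X\}$; $F_n(f)(A)=f(A)$. $SF_n(X)=F_n(X)/F_1(X)$ is the quotient collapsing $F_1(X)$ to a point, $q$ the quotient map, $F_X=q(F_1(X))$, and $SF_n(f)(\chi)=q(F_n(f)(q^{-1}(\chi)))$ for $\chi\neq F_X$, $SF_n(f)(F_X)=F_X$. A function $g:Z\to Z$ is Touhey if for every pair of nonempty open $U,V\subseteq Z$ there exist a periodic point $z\in U$ (i.e. $g^m(z)=z$ for some $m\in\mathbb{N}$) and $k\in\mathbb{Z}_+$ with $g^k(z)\in V$. *)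

theory Defs
  imports "HOL-Analysis.Analysis"
begin

definition compactum :: "'a topology \<Rightarrow> bool" where
  "compactum X \<longleftrightarrow>
     (\<exists>x\<in>topspace X. \<exists>y\<in>topspace X. x \<noteq> y) \<and>
     compact_space X \<and>
     X derived_set_of (topspace X) = topspace X \<and>
     Hausdorff_space X"

definition quotient_topology :: "'a topology \<Rightarrow> ('a \<Rightarrow> 'b) \<Rightarrow> 'b topology" where
  "quotient_topology T q =
     topology (\<lambda>U. U \<subseteq> q ` topspace T \<and> openin T {x \<in> topspace T. q x \<in> U})"

lemma istopology_quotient:
  "istopology (\<lambda>U. U \<subseteq> q ` topspace T \<and> openin T {x \<in> topspace T. q x \<in> U})"
proof -
  have 1: "{x \<in> topspace T. q x \<in> S \<and> q x \<in> R} = {x \<in> topspace T. q x \<in> S} \<inter> {x \<in> topspace T. q x \<in> R}" for S R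
    by blast
  have 2: "{x \<in> topspace T. \<exists>X\<in>K. q x \<in> X} = (\<Union>U\<in>K. {x \<in> topspace T. q x \<in> U})" for K
    by blast
  show ?thesis unfolding istopology_def
    by (auto simp: 1 2 intro!: openin_Union)
qed

lemma openin_quotient_topology:
  "openin (quotient_topology T q) U \<longleftrightarrow>
     U \<subseteq> q ` topspace T \<and> openin T {x \<in> topspace T. q x \<in> U}"
  unfolding quotient_topology_def using istopology_quotient[of q T] by simp

definition vietoris :: "'a topology \<Rightarrow> 'a set topology" where
  "vietoris X = topology_generated_by
     ({{A. A \<subseteq> U} | U. openin X U} \<union>
      {{A. A \<subseteq> topspace X \<and> A \<inter> U \<noteq> {}} | U. openin X U})"

definition fin_subsets :: "nat \<Rightarrow> 'a topology \<Rightarrow> 'a set set" where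
  "fin_subsets n X = {A. A \<subseteq> topspace X \<and> A \<noteq> {} \<and> finite A \<and> card A \<le> n}"

definition Fn_top :: "nat \<Rightarrow> 'a topology \<Rightarrow> 'a set topology" where
  "Fn_top n X = subtopology (vietoris X) (fin_subsets n X)"

definition Fn_map :: "('a \<Rightarrow> 'a) \<Rightarrow> 'a set \<Rightarrow> 'a set" where
  "Fn_map f A = f ` A"

text \<open>Quotient map F_n(X) -> SF_n(X) = F_n(X)/F_1(X). The collapsed point F_X is
  represented by the empty set (which is not an element of F_n(X)); every other
  point is represented by itself.\<close>
definition SF_quot :: "'a topology \<Rightarrow> 'a set \<Rightarrow> 'a set" where
  "SF_quot X A = (if A \<in> fin_subsets 1 X then {} else A)"

definition SF_top :: "nat \<Rightarrow> 'a topology \<Rightarrow> 'a set topology" where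
  "SF_top n X = quotient_topology (Fn_top n X) (SF_quot X)"

text \<open>SF_n(f)(chi) = q(F_n(f)(q^{-1}(chi))) for chi \<noteq> F_X, and SF_n(f)(F_X) = F_X.\<close>
definition SF_map :: "'a topology \<Rightarrow> ('a \<Rightarrow> 'a) \<Rightarrow> 'a set \<Rightarrow> 'a set" where
  "SF_map X f C = (if C = {} then {} else SF_quot X (Fn_map f C))"

definition touhey :: "'b topology \<Rightarrow> ('b \<Rightarrow> 'b) \<Rightarrow> bool" where
  "touhey Z g \<longleftrightarrow>
     (\<forall>U V. openin Z U \<longrightarrow> openin Z V \<longrightarrow> U \<noteq> {} \<longrightarrow> V \<noteq> {} \<longrightarrow>
        (\<exists>z\<in>U. (\<exists>m::nat. m \<ge> 1 \<and> (g ^^ m) z = z) \<and> (\<exists>k::nat. (g ^^ k) z \<in> V)))"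

end

theory Submission
  imports Defs
begin

lemma topspace_vietoris: "topspace (vietoris X) = {A. A \<subseteq> topspace X}"
  unfolding vietoris_def topology_generated_by_topspace
  by (auto dest: openin_subset)

lemma topspace_Fn: "topspace (Fn_top n X) = fin_subsets n X"
  unfolding Fn_top_def by (auto simp: topspace_vietoris fin_subsets_def)

lemma openin_box: "openin X U \<Longrightarrow> openin (vietoris X) {A. A \<subseteq> U}"
  unfolding vietoris_def by (rule topology_generated_by_Basis) blast

lemma openin_hit: "openin X U \<Longrightarrow> openin (vietoris X) {A. A \<subseteq> topspace X \<and> A \<inter> U \<noteq> {}}"
  unfolding vietoris_def by (rule topology_generated_by_Basis) blast

lemma openin_Fn_box: "openin X U \<Longrightarrow> openin (Fn_top n X) (fin_subsets n X \<inter> {A. A \<subseteq> U})"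
  unfolding Fn_top_def by (intro openin_subtopology_Int2 openin_box)

lemma openin_Fn_hit: "openin X U \<Longrightarrow>
   openin (Fn_top n X) (fin_subsets n X \<inter> {A. A \<subseteq> topspace X \<and> A \<inter> U \<noteq> {}})"
  unfolding Fn_top_def by (intro openin_subtopology_Int2 openin_hit)

lemma cont_pair:
  assumes "x \<in> topspace X" "n \<ge> 2"
  shows "continuous_map X (Fn_top n X) (\<lambda>y. {x, y})"
proof -
  have "continuous_map X (vietoris X) (\<lambda>y. {x, y})"
    unfolding vietoris_def
  proof (rule continuous_on_generated_topo)
    fix U assume "U \<in> {{A. A \<subseteq> U} |U. openin X U} \<union>
       {{A. A \<subseteq> topspace X \<and> A \<inter> U \<noteq> {}} |U. openin X U}"
    then consider Ob where "openin X Ob" "U = {A. A \<subseteq> Ob}"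
      | Ob where "openin X Ob" "U = {A. A \<subseteq> topspace X \<and> A \<inter> Ob \<noteq> {}}" by blast
    then show "openin X ((\<lambda>y. {x, y}) -` U \<inter> topspace X)"
    proof cases
      case 1
      show ?thesis
      proof (cases "x \<in> Ob")
        case True
        then have "(\<lambda>y. {x, y}) -` U \<inter> topspace X = Ob"
          using 1 openin_subset[OF 1(1)] by auto
        then show ?thesis using 1 by simp
      next
        case False
        then have "(\<lambda>y. {x, y}) -` U \<inter> topspace X = {}"
          using 1 by auto
        then show ?thesis by simp
      qed
    next
      case 2
      show ?thesis
      proof (cases "x \<in> Ob")
        case True
        then have "(\<lambda>y. {x, y}) -` U \<inter> topspace X = topspace X"
          using 2 assms by auto
        then show ?thesis by simp
      next
        case False
        then have "(\<lambda>y. {x, y}) -` U \<inter> topspace X = Ob"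
          using 2 assms openin_subset[OF 2(1)] by auto
        then show ?thesis using 2 by simp
      qed
    qed
  next
    show "(\<lambda>y. {x, y}) ` topspace X \<subseteq> \<Union> ({{A. A \<subseteq> U} |U. openin X U} \<union>
       {{A. A \<subseteq> topspace X \<and> A \<inter> U \<noteq> {}} |U. openin X U})"
      using assms by auto
  qed
  moreover have "(\<lambda>y. {x, y}) ` topspace X \<subseteq> fin_subsets n X"
  proof
    fix B assume "B \<in> (\<lambda>y. {x, y}) ` topspace X"
    then obtain y where y: "y \<in> topspace X" "B = {x,y}" by auto
    have "card {x,y} \<le> 2" by (simp add: card_insert_le_m1)
    then show "B \<in> fin_subsets n X" using y assms unfolding fin_subsets_def by auto
  qed
  ultimately show ?thesis unfolding Fn_top_def
    by (simp add: continuous_map_in_subtopology image_subset_iff_funcset)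
qed

lemma nonsingle_open:
  assumes X: "compactum X" and n: "n \<ge> 2" and U: "openin (Fn_top n X) U" and A: "A \<in> U"
  shows "\<exists>W. openin (Fn_top n X) W \<and> W \<noteq> {} \<and> W \<subseteq> U \<and> W \<inter> fin_subsets 1 X = {}"
proof -
  have UF: "U \<subseteq> fin_subsets n X" using openin_subset[OF U] topspace_Fn by metis
  have "\<exists>B a b. B \<in> U \<and> a \<in> B \<and> b \<in> B \<and> a \<noteq> b"
  proof (cases "\<exists>a\<in>A. \<exists>b\<in>A. a \<noteq> b")
    case True then show ?thesis using A by blast
  next
    case False
    have "A \<in> fin_subsets n X" using A UF by auto
    then obtain x where x: "x \<in> A" "x \<in> topspace X" unfolding fin_subsets_def by auto
    with False have Ax: "A = {x}" by blast
    define P where "P = {y \<in> topspace X. {x, y} \<in> U}"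
    have "openin X P" unfolding P_def
      using openin_continuous_map_preimage[OF cont_pair[OF x(2) n] U] by simp
    moreover have "x \<in> P" using Ax A x unfolding P_def by simp
    moreover have "x \<in> X derived_set_of topspace X" using X x unfolding compactum_def by auto
    ultimately obtain y where "y \<noteq> x" "y \<in> P" unfolding in_derived_set_of by blast
    then show ?thesis unfolding P_def by blast
  qed
  then obtain B a b where B: "B \<in> U" "a \<in> B" "b \<in> B" "a \<noteq> b" by blast
  have "B \<subseteq> topspace X" using B UF unfolding fin_subsets_def by auto
  then obtain P Q where PQ: "openin X P" "openin X Q" "a \<in> P" "b \<in> Q" "disjnt P Q"
    using X B unfolding compactum_def Hausdorff_space_def by blast
  define W where "W = U \<inter> (fin_subsets n X \<inter> {A. A \<subseteq> topspace X \<and> A \<inter> P \<noteq> {}})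
     \<inter> (fin_subsets n X \<inter> {A. A \<subseteq> topspace X \<and> A \<inter> Q \<noteq> {}})"
  have "openin (Fn_top n X) W" unfolding W_def
    using U openin_Fn_hit[OF PQ(1)] openin_Fn_hit[OF PQ(2)] by blast
  moreover have "B \<in> W" unfolding W_def using B UF PQ \<open>B \<subseteq> topspace X\<close> by auto
  moreover have "W \<inter> fin_subsets 1 X = {}"
  proof (rule ccontr)
    assume "W \<inter> fin_subsets 1 X \<noteq> {}"
    then obtain C where C: "C \<in> W" "C \<in> fin_subsets 1 X" by blast
    then obtain c d where "c \<in> C" "d \<in> C" "c \<in> P" "d \<in> Q" unfolding W_def by blast
    moreover have "c \<noteq> d" using calculation PQ(5) unfolding disjnt_def by blast
    moreover have "finite C" "card C \<le> Suc 0" using C(2) unfolding fin_subsets_def by auto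
    ultimately show False using card_le_Suc0_iff_eq by blast
  qed
  ultimately show ?thesis unfolding W_def by blast
qed


lemma Fn_iter: "(Fn_map f ^^ k) A = (f ^^ k) ` A"
  by (induction k) (auto simp: Fn_map_def image_comp)

lemma fin_subsets_image:
  assumes "f ` topspace X \<subseteq> topspace X" "A \<in> fin_subsets n X"
  shows "Fn_map f A \<in> fin_subsets n X"
  using assms card_image_le[of A f] unfolding fin_subsets_def Fn_map_def by auto

lemma fin_subsets_iter:
  assumes "f ` topspace X \<subseteq> topspace X" "A \<in> fin_subsets n X"
  shows "(Fn_map f ^^ j) A \<in> fin_subsets n X"
  by (induction j) (auto simp: assms fin_subsets_image)

lemma funpow_periodic: "(g ^^ m) z = z \<Longrightarrow> (g ^^ (m * j)) z = z"
proof (induction j)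
  case (Suc j)
  have "(g ^^ (m * Suc j)) z = (g ^^ m) ((g ^^ (m * j)) z)"
    by (simp add: funpow_add)
  then show ?case using Suc by simp
qed simp

lemma funpow_absorb:
  assumes "\<And>x. P x \<Longrightarrow> P (g x)" "P ((g ^^ j) z)"
  shows "P ((g ^^ (i + j)) z)"
  by (induction i) (auto simp: assms)

lemma periodic_absorb:
  assumes "\<And>x. P x \<Longrightarrow> P (g x)" "P ((g ^^ j) z)" "(g ^^ m) z = z" "m \<ge> 1"
  shows "P z"
proof -
  have "m * j = (m * j - j) + j" using assms(4) by simp
  then have "P ((g ^^ (m * j)) z)" using funpow_absorb[of P g j z "m * j - j", OF assms(1,2)] by metis
  then show ?thesis using funpow_periodic[OF assms(3)] by simp
qed

lemma sf_open:
  assumes "openin (Fn_top n X) W" "W \<inter> fin_subsets 1 X = {}"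
  shows "openin (SF_top n X) W"
proof -
  have WF: "W \<subseteq> fin_subsets n X" using openin_subset[OF assms(1)] topspace_Fn by metis
  have q: "SF_quot X A = A" if "A \<in> W" for A using that assms(2) unfolding SF_quot_def by auto
  have "W \<subseteq> SF_quot X ` topspace (Fn_top n X)"
    using q WF topspace_Fn by (metis image_eqI subsetI subset_iff)
  moreover have "{x \<in> topspace (Fn_top n X). SF_quot X x \<in> W} = W"
  proof -
    have "{} \<notin> W" using WF unfolding fin_subsets_def by auto
    then show ?thesis using WF q topspace_Fn[of n X] assms(2) unfolding SF_quot_def by auto
  qed
  ultimately show ?thesis unfolding SF_top_def openin_quotient_topology using assms(1) by simp
qed

lemma part1_23:
  assumes X: "compactum X" and n: "n \<ge> 2" and f: "f ` topspace X \<subseteq> topspace X"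
    and T: "touhey (Fn_top n X) (Fn_map f)"
  shows "touhey (SF_top n X) (SF_map X f)"
  unfolding touhey_def
proof (intro allI impI)
  fix U V assume U: "openin (SF_top n X) U" and V: "openin (SF_top n X) V" and
    Une: "U \<noteq> {}" and Vne: "V \<noteq> {}"
  define U0 where "U0 = {x \<in> topspace (Fn_top n X). SF_quot X x \<in> U}"
  define V0 where "V0 = {x \<in> topspace (Fn_top n X). SF_quot X x \<in> V}"
  have U0: "openin (Fn_top n X) U0" "U0 \<noteq> {}"
    using U Une unfolding U0_def SF_top_def openin_quotient_topology by auto
  have V0: "openin (Fn_top n X) V0" "V0 \<noteq> {}"
    using V Vne unfolding V0_def SF_top_def openin_quotient_topology by auto
  obtain WU where WU: "openin (Fn_top n X) WU" "WU \<noteq> {}" "WU \<subseteq> U0" "WU \<inter> fin_subsets 1 X = {}"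
    using nonsingle_open[OF X n U0(1)] U0(2) by blast
  obtain WV where WV: "openin (Fn_top n X) WV" "WV \<noteq> {}" "WV \<subseteq> V0" "WV \<inter> fin_subsets 1 X = {}"
    using nonsingle_open[OF X n V0(1)] V0(2) by blast
  obtain A m k where A: "A \<in> WU" "m \<ge> 1" "(Fn_map f ^^ m) A = A" "(Fn_map f ^^ k) A \<in> WV"
  proof -
    have "\<exists>z\<in>WU. (\<exists>m\<ge>1. (Fn_map f ^^ m) z = z) \<and> (\<exists>k. (Fn_map f ^^ k) z \<in> WV)"
      using T WU(1,2) WV(1,2) unfolding touhey_def by blast
    then show ?thesis using that by blast
  qed
  have AF: "A \<in> fin_subsets n X" using A(1) WU(3) topspace_Fn unfolding U0_def by auto
  have not1: "(Fn_map f ^^ j) A \<notin> fin_subsets 1 X" for j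
  proof
    assume "(Fn_map f ^^ j) A \<in> fin_subsets 1 X"
    moreover have step: "\<And>B. B \<in> fin_subsets 1 X \<Longrightarrow> Fn_map f B \<in> fin_subsets 1 X"
      using fin_subsets_image[OF f] by blast
    ultimately have "A \<in> fin_subsets 1 X"
      using periodic_absorb[where P="\<lambda>B. B \<in> fin_subsets 1 X" and g="Fn_map f", OF step _ A(3,2)]
      by simp
    then show False using A(1) WU(4) by blast
  qed
  have ne: "(Fn_map f ^^ j) A \<noteq> {}" for j
    using fin_subsets_iter[OF f AF, of j] unfolding fin_subsets_def by auto
  have it: "(SF_map X f ^^ j) A = (Fn_map f ^^ j) A" for j
  proof (induction j)
    case (Suc j)
    have "(SF_map X f ^^ Suc j) A = SF_map X f ((Fn_map f ^^ j) A)" using Suc by simp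
    also have "\<dots> = SF_quot X ((Fn_map f ^^ Suc j) A)" using ne[of j] unfolding SF_map_def by simp
    also have "\<dots> = (Fn_map f ^^ Suc j) A" using not1[of "Suc j"] unfolding SF_quot_def by simp
    finally show ?case .
  qed simp
  have qA: "SF_quot X B = B" if "B \<in> WU \<union> WV" for B using that WU(4) WV(4) unfolding SF_quot_def by auto
  show "\<exists>z\<in>U. (\<exists>m\<ge>1. (SF_map X f ^^ m) z = z) \<and> (\<exists>k. (SF_map X f ^^ k) z \<in> V)"
  proof (intro bexI conjI exI)
    show "A \<in> U" using A(1) WU(3) qA[of A] unfolding U0_def by auto
    show "1 \<le> m" "(SF_map X f ^^ m) A = A" using A it by auto
    show "(SF_map X f ^^ k) A \<in> V" using A(4) WV(3) qA[of "(Fn_map f ^^ k) A"] it[of k]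
      unfolding V0_def by auto
  qed
qed

lemma part1_32:
  assumes X: "compactum X" and n: "n \<ge> 2"
    and T: "touhey (SF_top n X) (SF_map X f)"
  shows "touhey (Fn_top n X) (Fn_map f)"
  unfolding touhey_def
proof (intro allI impI)
  fix U V assume U: "openin (Fn_top n X) U" and V: "openin (Fn_top n X) V" and
    Une: "U \<noteq> {}" and Vne: "V \<noteq> {}"
  obtain WU where WU: "openin (Fn_top n X) WU" "WU \<noteq> {}" "WU \<subseteq> U" "WU \<inter> fin_subsets 1 X = {}"
    using nonsingle_open[OF X n U] Une by blast
  obtain WV where WV: "openin (Fn_top n X) WV" "WV \<noteq> {}" "WV \<subseteq> V" "WV \<inter> fin_subsets 1 X = {}"
    using nonsingle_open[OF X n V] Vne by blast
  have "openin (SF_top n X) WU" "openin (SF_top n X) WV" using sf_open WU WV by auto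
  then have "\<exists>z\<in>WU. (\<exists>m\<ge>1. (SF_map X f ^^ m) z = z) \<and> (\<exists>k. (SF_map X f ^^ k) z \<in> WV)"
    using T WU(2) WV(2) unfolding touhey_def by blast
  then obtain A m k where A: "A \<in> WU" "m \<ge> 1" "(SF_map X f ^^ m) A = A" "(SF_map X f ^^ k) A \<in> WV"
    by blast
  have AF: "A \<in> fin_subsets n X" using A(1) WU(1) openin_subset topspace_Fn by blast
  have ne: "(SF_map X f ^^ j) A \<noteq> {}" for j
  proof
    assume "(SF_map X f ^^ j) A = {}"
    moreover have step: "\<And>B. B = {} \<Longrightarrow> SF_map X f B = {}"
      unfolding SF_map_def by simp
    ultimately have "A = {}"
      using periodic_absorb[where P="\<lambda>B. B = {}" and g="SF_map X f", OF step _ A(3,2)]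
      by simp
    then show False using AF unfolding fin_subsets_def by auto
  qed
  have it: "(SF_map X f ^^ j) A = (Fn_map f ^^ j) A" for j
  proof (induction j)
    case (Suc j)
    have "(SF_map X f ^^ Suc j) A = SF_map X f ((Fn_map f ^^ j) A)" using Suc by simp
    also have "\<dots> = SF_quot X ((Fn_map f ^^ Suc j) A)" using ne[of j] Suc unfolding SF_map_def by simp
    finally have e: "(SF_map X f ^^ Suc j) A = SF_quot X ((Fn_map f ^^ Suc j) A)" .
    then have "SF_quot X ((Fn_map f ^^ Suc j) A) \<noteq> {}" using ne[of "Suc j"] by simp
    then have "SF_quot X ((Fn_map f ^^ Suc j) A) = (Fn_map f ^^ Suc j) A"
      unfolding SF_quot_def by (simp split: if_splits)
    then show ?case using e by simp
  qed simp
  show "\<exists>z\<in>U. (\<exists>m\<ge>1. (Fn_map f ^^ m) z = z) \<and> (\<exists>k. (Fn_map f ^^ k) z \<in> V)"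
  proof (intro bexI conjI exI)
    show "A \<in> U" using A(1) WU(3) by blast
    show "1 \<le> m" "(Fn_map f ^^ m) A = A" using A(2,3) it[of m] by auto
    show "(Fn_map f ^^ k) A \<in> V" using A(4) WV(3) it[of k] by auto
  qed
qed

lemma perm_periodic:
  assumes A: "finite A" "h ` A = A" "z \<in> A"
  shows "\<exists>p\<ge>1. (h ^^ p) z = z"
proof -
  have inj: "inj_on h A" using A by (simp add: eq_card_imp_inj_on)
  have mapsto: "(h ^^ i) ` A = A" for i
  proof (induction i)
    case (Suc i)
    have "(h ^^ Suc i) ` A = h ` ((h ^^ i) ` A)" by (simp add: image_comp)
    then show ?case using Suc A(2) by simp
  qed simp
  have inji: "inj_on (h ^^ i) A" for i
  proof (induction i)
    case (Suc i)
    then show ?case using comp_inj_on[OF Suc.IH, of h] inj mapsto[of i] by (simp add: o_def)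
  qed simp
  have "\<not> inj_on (\<lambda>i. (h ^^ i) z) {..card A}"
  proof
    assume "inj_on (\<lambda>i. (h ^^ i) z) {..card A}"
    moreover have "(\<lambda>i. (h ^^ i) z) ` {..card A} \<subseteq> A" using mapsto A(3) by blast
    ultimately have "card {..card A} \<le> card A" using card_inj_on_le A(1) by blast
    then show False by simp
  qed
  then obtain i j where ij: "i < j" "(h ^^ i) z = (h ^^ j) z"
    unfolding inj_on_def by (metis linorder_neqE_nat)
  have "(h ^^ j) z = (h ^^ i) ((h ^^ (j - i)) z)"
    using ij(1) by (metis funpow_add le_add_diff_inverse less_imp_le o_apply)
  moreover have "(h ^^ (j - i)) z \<in> A" using mapsto A(3) by blast
  ultimately have "(h ^^ (j - i)) z = z" using inji[of i] ij(2) A(3) unfolding inj_on_def by metis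
  then show ?thesis using ij(1) by (intro exI[of _ "j - i"]) auto
qed

lemma part1_21:
  assumes X: "compactum X" and n: "n \<ge> 2"
    and T: "touhey (Fn_top n X) (Fn_map f)"
  shows "touhey X f"
  unfolding touhey_def
proof (intro allI impI)
  fix U V assume U: "openin X U" and V: "openin X V" and
    Une: "U \<noteq> {}" and Vne: "V \<noteq> {}"
  have sing: "fin_subsets n X \<inter> {A. A \<subseteq> W} \<noteq> {}" if W: "openin X W" "W \<noteq> {}" for W
  proof -
    obtain x where "x \<in> W" using W by auto
    then have "{x} \<in> fin_subsets n X \<inter> {A. A \<subseteq> W}"
      using openin_subset[OF W(1)] n unfolding fin_subsets_def by auto
    then show ?thesis by blast
  qed
  obtain A m k where A: "A \<in> fin_subsets n X \<inter> {A. A \<subseteq> U}" "m \<ge> 1" "(Fn_map f ^^ m) A = A"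
     "(Fn_map f ^^ k) A \<in> fin_subsets n X \<inter> {A. A \<subseteq> V}"
  proof -
    have "\<exists>z\<in>fin_subsets n X \<inter> {A. A \<subseteq> U}. (\<exists>m\<ge>1. (Fn_map f ^^ m) z = z) \<and>
       (\<exists>k. (Fn_map f ^^ k) z \<in> fin_subsets n X \<inter> {A. A \<subseteq> V})"
      using T openin_Fn_box[OF U, of n] openin_Fn_box[OF V, of n] sing[OF U Une] sing[OF V Vne]
      unfolding touhey_def by blast
    then show ?thesis using that by blast
  qed
  have fA: "finite A" "A \<noteq> {}" using A(1) unfolding fin_subsets_def by auto
  then obtain z where z: "z \<in> A" by auto
  obtain p where p: "p \<ge> 1" "((f ^^ m) ^^ p) z = z"
  proof -
    have "(f ^^ m) ` A = A" using A(3) Fn_iter[where f=f and k=m and A=A] by simp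
    then show ?thesis using perm_periodic[OF fA(1) _ z, of "f ^^ m"] that by blast
  qed
  show "\<exists>z\<in>U. (\<exists>m\<ge>1. (f ^^ m) z = z) \<and> (\<exists>k. (f ^^ k) z \<in> V)"
  proof (intro bexI conjI exI)
    show "z \<in> U" using A(1) z by auto
    show "1 \<le> m * p" "(f ^^ (m * p)) z = z" using p A(2) by (auto simp: funpow_mult)
    show "(f ^^ k) z \<in> V" using A(4) z Fn_iter[where f=f and k=k and A=A] by auto
  qed
qed


definition Dl :: "nat \<Rightarrow> real \<Rightarrow> bool" where
  "Dl N x \<longleftrightarrow> 0 < x \<and> x < 1 \<and> (\<exists>c::int. odd c \<and> x * 2^N = of_int c)"

definition gg :: "real \<Rightarrow> real" where
  "gg x = (if \<exists>N. Dl N x then frac (x + 2 / 2^(SOME N. Dl N x)) else x)"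

definition ff :: "real \<Rightarrow> real" where
  "ff x = (if x \<le> 1 then x + 2 else gg (x - 2))"

definition SS :: "real set" where "SS = {0..1} \<union> {2..3}"

lemma Dl_unique_lt:
  assumes "Dl N x" "Dl M x" "N < M" shows False
proof -
  obtain c where c: "odd c" "x * 2^N = of_int c" using assms(1) unfolding Dl_def by auto
  obtain d where d: "odd d" "x * 2^M = of_int d" using assms(2) unfolding Dl_def by auto
  have "x * 2^M = x * 2^N * 2^(M-N)"
    using assms(3) by (simp add: power_add[symmetric])
  then have "real_of_int d = real_of_int (c * 2^(M-N))" using c d by simp
  then have "d = c * 2^(M-N)" by linarith
  moreover have "even (c * 2^(M-N))" using assms(3) by simp
  ultimately show False using d by simp
qed

lemma Dl_unique: "Dl N x \<Longrightarrow> Dl M x \<Longrightarrow> N = M"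
  using Dl_unique_lt by (metis linorder_neqE_nat)

lemma Dl_pt:
  assumes "odd r" "0 < r" "r < 2^N"
  shows "Dl N (of_int r / 2^N)"
proof -
  have "real_of_int r < real_of_int (2^N)" using assms(3) by linarith
  then have "real_of_int r < 2^N" by simp
  moreover have "real_of_int r > 0" using assms(2) by simp
  ultimately show ?thesis unfolding Dl_def using assms(1) by auto
qed

lemma N_pos: "odd (r::int) \<Longrightarrow> 0 < r \<Longrightarrow> r < 2^N \<Longrightarrow> N \<ge> 1"
  by (cases N) auto

lemma frac_div:
  assumes "(M::int) > 0"
  shows "frac (of_int a / of_int M) = of_int (a mod M) / (of_int M :: real)"
proof -
  have "a = M * (a div M) + a mod M" by simp
  then have e: "real_of_int a = of_int M * of_int (a div M) + of_int (a mod M)"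
    by (metis of_int_add of_int_mult)
  have "of_int a / (of_int M::real) = of_int (a mod M) / of_int M + of_int (a div M)"
    using assms unfolding e by (simp add: field_simps)
  then have "frac (of_int a / (of_int M::real)) = frac (of_int (a mod M) / of_int M)"
    by (simp add: frac_add_of_int_right)
  also have "\<dots> = of_int (a mod M) / of_int M"
    using assms by (subst frac_eq) (auto simp: pos_mod_bound)
  finally show ?thesis .
qed

lemma odd_mod:
  assumes "odd (a::int)" "N \<ge> 1"
  shows "odd (a mod 2^N) \<and> 0 < a mod 2^N \<and> a mod 2^N < 2^N"
proof -
  have "(2::int) dvd 2^N" using assms(2) by (simp add: dvd_power)
  then have "odd (a mod 2^N)" using assms(1) dvd_mod_iff by blast
  moreover have "0 \<le> a mod 2^N" "a mod 2^N < 2^N" by simp_all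
  moreover have "a mod 2^N \<noteq> 0" using calculation(1) by auto
  ultimately show ?thesis by linarith
qed

lemma gg_pt:
  assumes "odd r" "0 < r" "r < 2^N"
  shows "gg (of_int r / 2^N) = of_int ((r + 2) mod 2^N) / 2^N"
proof -
  have D: "Dl N (of_int r / 2^N)" using Dl_pt[OF assms] .
  then have S: "(SOME M. Dl M (of_int r / 2^N)) = N"
    using Dl_unique by (metis someI_ex)
  have "gg (of_int r / 2^N) = frac (of_int r / 2^N + 2 / 2^N)"
    unfolding gg_def using D S by auto
  also have "of_int r / 2^N + 2 / 2^N = (of_int (r + 2) / of_int (2^N) :: real)"
    by (simp add: add_divide_distrib)
  also have "frac \<dots> = of_int ((r + 2) mod 2^N) / of_int (2^N)"
    by (rule frac_div) simp
  finally show ?thesis by simp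
qed

lemma gg_iter:
  assumes "odd r" "0 < r" "r < 2^N"
  shows "(gg ^^ k) (of_int r / 2^N) = of_int ((r + 2 * int k) mod 2^N) / 2^N"
proof (induction k)
  case 0
  then show ?case using assms by simp
next
  case (Suc k)
  have N1: "N \<ge> 1" using N_pos assms by blast
  have o: "odd (r + 2 * int k)" using assms(1) by simp
  note om = odd_mod[OF o N1]
  have "(gg ^^ Suc k) (of_int r / 2^N) = gg (of_int ((r + 2 * int k) mod 2^N) / 2^N)"
    using Suc by simp
  also have "\<dots> = of_int (((r + 2 * int k) mod 2^N + 2) mod 2^N) / 2^N"
    using gg_pt om by blast
  also have "((r + 2 * int k) mod 2^N + 2) mod 2^N = (r + 2 * int (Suc k)) mod 2^N"
  proof -
    have "((r + 2 * int k) mod 2^N + 2) mod 2^N = (r + 2 * int k + 2) mod 2^N"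
      by (rule mod_add_left_eq)
    moreover have "r + 2 * int k + 2 = r + 2 * int (Suc k)" by simp
    ultimately show ?thesis by simp
  qed
  finally show ?case .
qed

lemma gg_period:
  assumes "odd r" "0 < r" "r < 2^N"
  shows "(gg ^^ (2^N)) (of_int r / 2^N) = of_int r / 2^N"
proof -
  have "(r + 2 * int (2^N)) mod 2^N = r mod 2^N"
    by (metis mod_mult_self2 mult.commute of_nat_numeral of_nat_power)
  also have "\<dots> = r" using assms by simp
  finally show ?thesis using gg_iter[OF assms, of "2^N"] by simp
qed

lemma gg_hit:
  assumes "odd r" "0 < r" "r < 2^N" "odd r'" "0 < r'" "r' < 2^N"
  shows "\<exists>k\<ge>1. (gg ^^ k) (of_int r / 2^N) = of_int r' / 2^N"
proof -
  define M :: int where "M = 2^N"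
  have M: "M > 0" unfolding M_def by simp
  define t where "t = (r' - r) div 2"
  have t: "r' - r = 2 * t" unfolding t_def using assms(1,4) by simp
  define k where "k = nat (t mod M) + 2^N"
  have "int k = t mod M + M" unfolding k_def M_def using M M_def by simp
  then have "r + 2 * int k = (r + 2 * t) + M * (2 - 2 * (t div M))"
    by (simp add: algebra_simps minus_div_mult_eq_mod[symmetric])
  then have "(r + 2 * int k) mod M = (r + 2 * t) mod M"
    by (metis mod_mult_self2)
  also have "\<dots> = r'" using t assms M_def by simp
  finally have "(gg ^^ k) (of_int r / 2^N) = of_int r' / 2^N"
    using gg_iter[OF assms(1-3), of k] M_def by simp
  moreover have "k \<ge> 1" unfolding k_def by (simp add: Suc_leI)
  ultimately show ?thesis by blast
qed

lemma gg_range: "x \<in> {0..1} \<Longrightarrow> gg x \<in> {0..1}"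
  unfolding gg_def using frac_ge_0 frac_lt_1 by (auto intro: less_imp_le)

lemma gg_iter_range: "x \<in> {0..1} \<Longrightarrow> (gg ^^ k) x \<in> {0..1}"
  by (induction k) (auto simp: gg_range simp del: atLeastAtMost_iff)

lemma ff_L: "t \<in> {0..1} \<Longrightarrow> ff t = t + 2" unfolding ff_def by auto
lemma ff_R: "t \<in> {0..1} \<Longrightarrow> ff (t + 2) = gg t" unfolding ff_def by auto

lemma ff_even:
  assumes "t \<in> {0..1}"
  shows "(ff ^^ (2 * k)) t = (gg ^^ k) t \<and> (ff ^^ (2 * k)) (t + 2) = (gg ^^ k) t + 2"
proof (induction k)
  case (Suc k)
  have e: "2 * Suc k = Suc (Suc (2 * k))" by simp
  have r: "(gg ^^ k) t \<in> {0..1}" using gg_iter_range assms by blast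
  show ?case unfolding e using Suc r
    by (simp add: ff_L ff_R gg_range del: atLeastAtMost_iff)
qed simp

lemma ff_odd:
  assumes "t \<in> {0..1}"
  shows "(ff ^^ Suc (2 * k)) t = (gg ^^ k) t + 2 \<and> (ff ^^ Suc (2 * k)) (t + 2) = (gg ^^ Suc k) t"
  using ff_even[OF assms, of k] gg_iter_range[OF assms, of k]
  by (simp add: ff_L ff_R del: atLeastAtMost_iff)

lemma ff_parity:
  assumes "t \<in> {0..1}"
  shows "(even k \<longrightarrow> (ff ^^ k) t \<in> {0..1}) \<and> (odd k \<longrightarrow> (ff ^^ k) t \<in> {2..3})"
proof (cases "even k")
  case True
  then obtain j where "k = 2 * j" by blast
  then show ?thesis using ff_even[OF assms, of j] gg_iter_range[OF assms, of j] by simp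
next
  case False
  then obtain j where "k = Suc (2 * j)" using oddE by (metis Suc_eq_plus1)
  then show ?thesis using ff_odd[OF assms, of j] gg_iter_range[OF assms, of j] by auto
qed

lemma dense_pt:
  fixes a b :: real
  assumes "0 \<le> a" "a < b" "b \<le> 1" "3 < 2^N * (b - a)"
  shows "\<exists>r::int. odd r \<and> 0 < r \<and> r < 2^N \<and> a < of_int r / 2^N \<and> of_int r / 2^N < b"
proof -
  define s where "s = \<lfloor>a * 2^N / 2\<rfloor>"
  have s1: "of_int s \<le> a * 2^N / 2" unfolding s_def by (rule of_int_floor_le)
  have s2: "a * 2^N / 2 < of_int s + 1" unfolding s_def by linarith
  define r where "r = 2 * s + 3"
  have s0: "s \<ge> 0" unfolding s_def using assms(1) by simp
  have rr: "real_of_int r = 2 * of_int s + 3" unfolding r_def by simp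
  have p: "(0::real) < 2^N" by simp
  have "a * 2^N < of_int r" using rr s2 by linarith
  then have 1: "a < of_int r / 2^N" using p by (simp add: pos_less_divide_eq)
  have "of_int r < b * 2^N" using rr s1 assms(4) by (simp add: algebra_simps)
  then have 2: "of_int r / 2^N < b" using p by (simp add: pos_divide_less_eq)
  have "b * 2^N \<le> 1 * (2::real)^N" using assms(3) p by (intro mult_right_mono) auto
  then have "of_int r < (2::real)^N" using \<open>of_int r < b * 2^N\<close> by linarith
  then have "real_of_int r < real_of_int (2^N)" by simp
  then have 3: "r < 2^N" by (simp only: of_int_less_iff)
  show ?thesis using 1 2 3 s0 unfolding r_def by (intro exI[of _ "2 * s + 3"]) auto
qed

lemma open_interval:
  assumes "openin (top_of_set SS) U" "u \<in> U"
  shows "\<exists>a b. 0 \<le> a \<and> a < b \<and> b \<le> 1 \<and>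
    ((\<forall>t. a < t \<and> t < b \<longrightarrow> t \<in> U) \<or> (\<forall>t. a < t \<and> t < b \<longrightarrow> t + 2 \<in> U))"
proof -
  have US: "U \<subseteq> SS" and e: "\<exists>e>0. \<forall>x'\<in>SS. dist x' u < e \<longrightarrow> x' \<in> U"
    using assms unfolding openin_euclidean_subtopology_iff by auto
  obtain e where e: "e > 0" "\<And>x'. x' \<in> SS \<Longrightarrow> dist x' u < e \<Longrightarrow> x' \<in> U" using e by blast
  have "u \<in> SS" using US assms by auto
  then consider "u \<in> {0..1}" | "u - 2 \<in> {0..1}" unfolding SS_def by auto
  then show ?thesis
  proof cases
    case 1
    define a where "a = max 0 (u - e)"
    define b where "b = min 1 (u + e)"
    have "\<forall>t. a < t \<and> t < b \<longrightarrow> t \<in> U"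
    proof (intro allI impI)
      fix t assume "a < t \<and> t < b"
      then have "t \<in> SS" "dist t u < e" unfolding a_def b_def SS_def dist_real_def by auto
      then show "t \<in> U" using e by blast
    qed
    moreover have "0 \<le> a" "a < b" "b \<le> 1" unfolding a_def b_def using 1 e by auto
    ultimately show ?thesis by blast
  next
    case 2
    define a where "a = max 0 (u - 2 - e)"
    define b where "b = min 1 (u - 2 + e)"
    have "\<forall>t. a < t \<and> t < b \<longrightarrow> t + 2 \<in> U"
    proof (intro allI impI)
      fix t assume "a < t \<and> t < b"
      then have "t + 2 \<in> SS" "dist (t + 2) u < e" unfolding a_def b_def SS_def dist_real_def by auto
      then show "t + 2 \<in> U" using e by blast
    qed
    moreover have "0 \<le> a" "a < b" "b \<le> 1" unfolding a_def b_def using 2 e by auto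
    ultimately show ?thesis by blast
  qed
qed


lemma compactum_SS: "compactum (top_of_set SS)"
  unfolding compactum_def
proof (intro conjI)
  show "\<exists>x\<in>topspace (top_of_set SS). \<exists>y\<in>topspace (top_of_set SS). x \<noteq> y"
    by (rule bexI[of _ 0], rule bexI[of _ 2]) (auto simp: SS_def)
  have "compact SS" unfolding SS_def by (intro compact_Un compact_Icc)
  then show "compact_space (top_of_set SS)"
    by (intro compact_space_subtopology) (simp add: compactin_euclidean_iff)
  show "Hausdorff_space (top_of_set SS)"
    by (intro Hausdorff_space_subtopology Hausdorff_space_euclidean)
  show "top_of_set SS derived_set_of topspace (top_of_set SS) = topspace (top_of_set SS)"
  proof
    show "top_of_set SS derived_set_of topspace (top_of_set SS) \<subseteq> topspace (top_of_set SS)"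
      by (rule derived_set_of_subset_topspace)
    show "topspace (top_of_set SS) \<subseteq> top_of_set SS derived_set_of topspace (top_of_set SS)"
    proof
      fix x assume x: "x \<in> topspace (top_of_set SS)"
      then have xS: "x \<in> SS" by simp
      have lim: "x islimpt SS"
      proof -
        from xS consider "x \<in> {0..1}" | "x \<in> {2..3}" unfolding SS_def by auto
        then show ?thesis
        proof cases
          case 1
          then have "x islimpt {0..1::real}" by (simp add: islimpt_Icc)
          then show ?thesis by (rule islimpt_subset) (auto simp: SS_def)
        next
          case 2
          then have "x islimpt {2..3::real}" by (simp add: islimpt_Icc)
          then show ?thesis by (rule islimpt_subset) (auto simp: SS_def)
        qed
      qed
      show "x \<in> top_of_set SS derived_set_of topspace (top_of_set SS)"
        unfolding in_derived_set_of
      proof (intro conjI allI impI)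
        show "x \<in> topspace (top_of_set SS)" using x .
        fix T assume T: "x \<in> T \<and> openin (top_of_set SS) T"
        then obtain Ob where Ob: "open Ob" "T = SS \<inter> Ob" unfolding openin_open by auto
        then obtain y where "y \<in> SS" "y \<in> Ob" "y \<noteq> x" using lim T unfolding islimpt_def by blast
        then show "\<exists>y. y \<noteq> x \<and> y \<in> topspace (top_of_set SS) \<and> y \<in> T" using Ob by auto
      qed
    qed
  qed
qed

lemma ff_maps: "ff ` topspace (top_of_set SS) \<subseteq> topspace (top_of_set SS)"
proof
  fix y assume "y \<in> ff ` topspace (top_of_set SS)"
  then obtain x where x: "x \<in> SS" "y = ff x" by auto
  show "y \<in> topspace (top_of_set SS)"
  proof (cases "x \<le> 1")
    case True then show ?thesis using x unfolding SS_def ff_def by auto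
  next
    case False
    then have "x - 2 \<in> {0..1}" using x unfolding SS_def by auto
    then have "gg (x - 2) \<in> {0..1}" by (rule gg_range)
    then show ?thesis using x False unfolding SS_def ff_def by auto
  qed
qed

lemma ff_touhey: "touhey (top_of_set SS) ff"
  unfolding touhey_def
proof (intro allI impI)
  fix U V assume U: "openin (top_of_set SS) U" and V: "openin (top_of_set SS) V"
    and Une: "U \<noteq> {}" and Vne: "V \<noteq> {}"
  obtain u where u: "u \<in> U" using Une by auto
  obtain v where v: "v \<in> V" using Vne by auto
  obtain a b where ab: "0 \<le> a" "a < b" "b \<le> 1"
    "(\<forall>t. a < t \<and> t < b \<longrightarrow> t \<in> U) \<or> (\<forall>t. a < t \<and> t < b \<longrightarrow> t + 2 \<in> U)"
    using open_interval[OF U u] by blast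
  obtain a' b' where ab': "0 \<le> a'" "a' < b'" "b' \<le> 1"
    "(\<forall>t. a' < t \<and> t < b' \<longrightarrow> t \<in> V) \<or> (\<forall>t. a' < t \<and> t < b' \<longrightarrow> t + 2 \<in> V)"
    using open_interval[OF V v] by blast
  obtain N where N: "3 / (b - a) + 3 / (b' - a') < (2::real) ^ N"
    using real_arch_pow[of 2 "3 / (b - a) + 3 / (b' - a')"] by auto
  have pos: "3 / (b - a) > 0" "3 / (b' - a') > 0" using ab ab' by auto
  have "3 / (b - a) < 2^N" using N pos by linarith
  then have N1: "3 < 2^N * (b - a)" using ab by (simp add: divide_less_eq)
  have "3 / (b' - a') < 2^N" using N pos by linarith
  then have N2: "3 < 2^N * (b' - a')" using ab' by (simp add: divide_less_eq)
  obtain r where r: "odd r" "0 < r" "r < 2^N" "a < of_int r / 2^N" "of_int r / 2^N < b"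
    using dense_pt[OF ab(1-3) N1] by blast
  obtain r' where r': "odd r'" "0 < r'" "r' < 2^N" "a' < of_int r' / 2^N" "of_int r' / 2^N < b'"
    using dense_pt[OF ab'(1-3) N2] by blast
  define x where "x = (of_int r / 2^N :: real)"
  define y where "y = (of_int r' / 2^N :: real)"
  have x01: "x \<in> {0..1}" using r ab unfolding x_def by auto
  have per: "(gg ^^ (2^N)) x = x" unfolding x_def by (rule gg_period[OF r(1-3)])
  obtain K where K: "K \<ge> 1" "(gg ^^ K) x = y"
    using gg_hit[OF r(1-3) r'(1-3)] unfolding x_def y_def by blast
  have yV: "y \<in> V \<or> y + 2 \<in> V" using ab'(4) r' unfolding y_def by auto
  have hitL: "(ff ^^ (2 * K)) x = y" "(ff ^^ Suc (2 * K)) x = y + 2"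
    using ff_even[OF x01, of K] ff_odd[OF x01, of K] K by auto
  have KK: "Suc (K - 1) = K" using K by simp
  have hitR: "(ff ^^ Suc (2 * (K - 1))) (x + 2) = y" "(ff ^^ (2 * K)) (x + 2) = y + 2"
    using ff_even[OF x01, of K] ff_odd[OF x01, of "K - 1"] K KK by auto
  have perL: "(ff ^^ (2 * 2^N)) x = x" and perR: "(ff ^^ (2 * 2^N)) (x + 2) = x + 2"
    using ff_even[OF x01, of "2^N"] per by auto
  have m1: "(1::nat) \<le> 2 * 2^N" by simp
  from ab(4) show "\<exists>z\<in>U. (\<exists>m\<ge>1. (ff ^^ m) z = z) \<and> (\<exists>k. (ff ^^ k) z \<in> V)"
  proof
    assume "\<forall>t. a < t \<and> t < b \<longrightarrow> t \<in> U"
    then have "x \<in> U" using r unfolding x_def by auto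
    then show ?thesis using perL m1 hitL yV by metis
  next
    assume "\<forall>t. a < t \<and> t < b \<longrightarrow> t + 2 \<in> U"
    then have "x + 2 \<in> U" using r unfolding x_def by auto
    then show ?thesis using perR m1 hitR yV by metis
  qed
qed

lemma not_touhey_F2: "\<not> touhey (Fn_top 2 (top_of_set SS)) (Fn_map ff)"
proof
  let ?X = "top_of_set SS"
  assume T: "touhey (Fn_top 2 ?X) (Fn_map ff)"
  have L: "openin ?X {0..1}"
    unfolding openin_open by (rule exI[of _ "{..<3/2}"]) (auto simp: SS_def)
  have R: "openin ?X {2..3}"
    unfolding openin_open by (rule exI[of _ "{3/2<..}"]) (auto simp: SS_def)
  define U where "U = fin_subsets 2 ?X \<inter> {A. A \<subseteq> {0..1}}"
  define V where "V = (fin_subsets 2 ?X \<inter> {A. A \<subseteq> topspace ?X \<and> A \<inter> {0..1} \<noteq> {}})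
     \<inter> (fin_subsets 2 ?X \<inter> {A. A \<subseteq> topspace ?X \<and> A \<inter> {2..3} \<noteq> {}})"
  have oU: "openin (Fn_top 2 ?X) U" unfolding U_def by (rule openin_Fn_box[OF L])
  have oV: "openin (Fn_top 2 ?X) V" unfolding V_def
    by (intro openin_Int openin_Fn_hit L R)
  have "{0} \<in> U" unfolding U_def fin_subsets_def SS_def by auto
  then have neU: "U \<noteq> {}" by auto
  have "card {0::real, 2} = 2" by simp
  then have "{0, 2} \<in> V" unfolding V_def fin_subsets_def SS_def by auto
  then have neV: "V \<noteq> {}" by auto
  obtain A m k where A: "A \<in> U" "(Fn_map ff ^^ k) A \<in> V"
    using T[unfolded touhey_def, rule_format, OF oU oV neU neV] by blast
  have AL: "A \<subseteq> {0..1}" using A(1) unfolding U_def by auto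
  have img: "(Fn_map ff ^^ k) A = (ff ^^ k) ` A" by (rule Fn_iter)
  obtain p q where p: "p \<in> A" "(ff ^^ k) p \<in> {0..1}" and q: "q \<in> A" "(ff ^^ k) q \<in> {2..3}"
    using A(2) unfolding V_def img by blast
  show False
  proof (cases "even k")
    case True
    then have "(ff ^^ k) q \<in> {0..1}" using ff_parity[of q k] AL q by auto
    then show False using q by auto
  next
    case False
    then have "(ff ^^ k) p \<in> {2..3}" using ff_parity[of p k] AL p by auto
    then show False using p by auto
  qed
qed

theorem theorem21:
  shows "(\<forall>(X::'a topology) (n::nat) (f::'a \<Rightarrow> 'a).
            compactum X \<and> n \<ge> 2 \<and> f ` topspace X \<subseteq> topspace X \<longrightarrow>
              (touhey (Fn_top n X) (Fn_map f) \<longleftrightarrow> touhey (SF_top n X) (SF_map X f)) \<and>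
              (touhey (Fn_top n X) (Fn_map f) \<longrightarrow> touhey X f))
       \<and> (\<exists>(X::real topology) (n::nat) (f::real \<Rightarrow> real).
            compactum X \<and> n \<ge> 2 \<and> f ` topspace X \<subseteq> topspace X \<and>
            touhey X f \<and> \<not> touhey (Fn_top n X) (Fn_map f))"
proof (intro conjI allI impI)
  fix X :: "'a topology" and n :: nat and f :: "'a \<Rightarrow> 'a"
  assume H: "compactum X \<and> n \<ge> 2 \<and> f ` topspace X \<subseteq> topspace X"
  then have X: "compactum X" and n: "n \<ge> 2" and f: "f ` topspace X \<subseteq> topspace X" by auto
  show "touhey (Fn_top n X) (Fn_map f) \<longleftrightarrow> touhey (SF_top n X) (SF_map X f)"
    using part1_23[OF X n f] part1_32[OF X n] by blast
  show "touhey (Fn_top n X) (Fn_map f) \<Longrightarrow> touhey X f"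
    using part1_21[OF X n] by blast
next
  show "\<exists>(X::real topology) (n::nat) (f::real \<Rightarrow> real).
            compactum X \<and> n \<ge> 2 \<and> f ` topspace X \<subseteq> topspace X \<and>
            touhey X f \<and> \<not> touhey (Fn_top n X) (Fn_map f)"
    using compactum_SS ff_maps ff_touhey not_touhey_F2 by (intro exI[of _ "top_of_set SS"] exI[of _ 2] exI[of _ ff]) auto
qed

end
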